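(* Let $Q\in\mathbb{N}$ be the denominator $q_\ell$ of a convergent of an irrational number, and let $x_j=\frac{j+\varepsilon_j}{Q}$ for $0\le j\le Q-1$, where $0<\varepsilon_j<1$. Then $$\sum_{j=0}^{Q-1}\log(x_j)-Q\int_0^1\log(x)\,dx=\sum_{j=1}^{Q-1}\frac{\varepsilon_j-1/2}{j}+\log(\varepsilon_0)+O(1),$$ with an absolute implied constant independent of the $\varepsilon_j$ and of $Q$. *)

theory Defs
  imports "HOL-Analysis.Analysis"
begin

fun cf_rem :: "real \<Rightarrow> nat \<Rightarrow> real" where
  "cf_rem x 0 = x"
| "cf_rem x (Suc n) = 1 / frac (cf_rem x n)"

definition cf_a :: "real \<Rightarrow> nat \<Rightarrow> int" where
  "cf_a x n = \<lfloor>cf_rem x n\<rfloor>"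

fun cf_q :: "real \<Rightarrow> nat \<Rightarrow> int" where
  "cf_q x 0 = 1"
| "cf_q x (Suc 0) = cf_a x 1"
| "cf_q x (Suc (Suc n)) = cf_a x (Suc (Suc n)) * cf_q x (Suc n) + cf_q x n"

definition is_convergent_denom :: "nat \<Rightarrow> bool" where
  "is_convergent_denom Q \<longleftrightarrow> (\<exists>\<alpha>::real. \<exists>l. \<alpha> \<notin> \<rat> \<and> int Q = cf_q \<alpha> l)"

end

theory Submission
  imports Defs "HOL-Real_Asymp.Real_Asymp"
begin

lemma ln_lower: fixes t::real assumes "0 \<le> t" shows "t - t^2/2 \<le> ln (1+t)"
proof -
  let ?h = "\<lambda>t::real. ln (1+t) - (t - t^2/2)"
  have "?h 0 \<le> ?h t"
  proof (rule DERIV_nonneg_imp_nondecreasing[OF assms])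
    fix x::real assume x0: "0 \<le> x" and x1: "x \<le> t"
    then have x: "0 \<le> x \<and> x \<le> t" by simp
    show "\<exists>y. DERIV ?h x :> y \<and> 0 \<le> y"
      apply (rule exI[of _ "1/(1+x) - (1 - x)"])
      using x by (auto intro!: derivative_eq_intros simp: field_simps power2_eq_square)
  qed
  then show ?thesis by simp
qed

lemma ln_upper: fixes t::real assumes "0 \<le> t" shows "ln (1+t) \<le> t - t^2/2 + t^3/3"
proof -
  let ?h = "\<lambda>t::real. (t - t^2/2 + t^3/3) - ln (1+t)"
  have "?h 0 \<le> ?h t"
  proof (rule DERIV_nonneg_imp_nondecreasing[OF assms])
    fix x::real assume x0: "0 \<le> x" and x1: "x \<le> t"
    then have x: "0 \<le> x \<and> x \<le> t" by simp
    show "\<exists>y. DERIV ?h x :> y \<and> 0 \<le> y"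
      apply (rule exI[of _ "(1 - x + x^2) - 1/(1+x)"])
      using x by (auto intro!: derivative_eq_intros simp: field_simps power2_eq_square power3_eq_cube)
  qed
  then show ?thesis by simp
qed

lemma diff_bound: assumes "n \<ge> (1::nat)"
  shows "\<bar>1 + 1/(2*real n) - (real n + 1) * ln (1 + 1/real n)\<bar> \<le> 1/(real n)^2"
proof -
  define t where "t = 1/real n"
  have t: "0 < t" "t \<le> 1" using assms by (auto simp: t_def)
  have n: "real n = 1/t" using assms by (simp add: t_def)
  have l: "t - t^2/2 \<le> ln (1+t)" "ln (1+t) \<le> t - t^2/2 + t^3/3" using ln_lower ln_upper t by auto
  have "(1/t + 1) * (t - t^2/2) \<le> (1/t+1) * ln (1+t)"
    by (rule mult_left_mono[OF l(1)]) (use t in auto)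
  moreover have "(1/t+1) * ln (1+t) \<le> (1/t + 1) * (t - t^2/2 + t^3/3)"
    by (rule mult_left_mono[OF l(2)]) (use t in auto)
  moreover have "(1/t + 1) * (t - t^2/2) = 1 + t/2 - t^2/2" using t
    by (simp add: field_simps power2_eq_square)
  moreover have "(1/t + 1) * (t - t^2/2 + t^3/3) = 1 + t/2 - t^2/6 + t^3/3" using t
    by (simp add: field_simps power2_eq_square power3_eq_cube)
  moreover have "t^3 \<le> t^2" using t by (simp add: power_decreasing)
  ultimately have "\<bar>1 + t/2 - (1/t+1) * ln (1+t)\<bar> \<le> t^2" using t by (auto simp: abs_le_iff)
  then show ?thesis unfolding n by (simp add: t_def field_simps)
qed

lemma sum_inv_sq: "n \<ge> 1 \<Longrightarrow> (\<Sum>j=1..n. 1/(real j)^2) \<le> 2 - 1/real n"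
proof (induction n rule: dec_induct)
  case base then show ?case by simp
next
  case (step n)
  have n1: "real n \<ge> 1" using step(1) by simp
  have "1/(real (Suc n))^2 \<le> 1/(real n * real (Suc n))"
    by (rule divide_left_mono) (use n1 in \<open>auto simp: power2_eq_square\<close>)
  also have "\<dots> = 1/real n - 1/real (Suc n)" using n1 by (simp add: field_simps)
  finally have key: "1/(real (Suc n))^2 \<le> 1/real n - 1/real (Suc n)" .
  have "(\<Sum>j=1..Suc n. 1/(real j)^2) = (\<Sum>j=1..n. 1/(real j)^2) + 1/(real (Suc n))^2" by simp
  also have "\<dots> \<le> 2 - 1/real n + (1/real n - 1/real (Suc n))" using step.IH key by linarith
  finally show ?case by simp
qed

lemma g_bound: assumes "j \<ge> (1::nat)" "0 < e" "e < 1"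
  shows "\<bar>ln (real j + e) - ln (real j) - e / real j\<bar> \<le> 1/(real j)^2"
proof -
  have "ln (real j + e) = ln (real j) + ln (1 + e/real j)" using assms
  proof -
    have "real j + e = real j * (1 + e/real j)" using assms by (simp add: field_simps)
    moreover have "1 + e/real j > 0" using assms by (simp add: add_pos_pos)
    ultimately show ?thesis using assms by (simp add: ln_mult)
  qed
  moreover have "e/real j - (e/real j)^2 \<le> ln (1 + e/real j)"
    using ln_one_plus_pos_lower_bound[of "e/real j"] assms by auto
  moreover have "ln (1 + e/real j) \<le> e/real j" using ln_add_one_self_le_self[of "e/real j"] assms by auto
  moreover have "(e/real j)^2 \<le> 1/(real j)^2" using assms
    by (simp add: power_divide divide_right_mono power_le_one abs_le_square_iff)
  ultimately show ?thesis by (auto simp: abs_le_iff)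
qed

lemma integral_ln01: "integral {0..1} ln = (-1::real)"
proof -
  define F where "F = (\<lambda>x::real. x * ln x - x)"
  have c: "continuous_on {0..1} F"
  proof (clarsimp simp: continuous_on_eq_continuous_within)
    fix x::real assume x: "0 \<le> x" "x \<le> 1"
    show "continuous (at x within {0..1}) F"
    proof (cases "x = 0")
      case True
      have "(F \<longlongrightarrow> 0) (at_right 0)" unfolding F_def by real_asymp
      then have "(F \<longlongrightarrow> F 0) (at 0 within {0..1})"
        by (simp add: at_within_Icc_at_right F_def)
      then show ?thesis using True by (simp add: continuous_within)
    next
      case False
      then have "x > 0" using x by simp
      then have "continuous (at x) F" unfolding F_def
        by (auto intro!: continuous_intros)
      then show ?thesis by (rule continuous_at_imp_continuous_within)
    qed
  qed
  have "(ln has_integral (F 1 - F 0)) {0..1}"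
  proof (rule fundamental_theorem_of_calculus_interior_strong[of "{}"])
    fix x::real assume "x \<in> {0<..<1} - {}"
    then have x: "0 < x" by simp
    show "(F has_vector_derivative ln x) (at x)"
      unfolding F_def has_real_derivative_iff_has_vector_derivative[symmetric]
      using x by (auto intro!: derivative_eq_intros)
  qed (use c in auto)
  then show ?thesis by (simp add: F_def integral_unique)
qed

lemma cf_rem_irr: "x \<notin> \<rat> \<Longrightarrow> cf_rem x n \<notin> \<rat>"
proof (induction n)
  case 0 then show ?case by simp
next
  case (Suc n)
  then have "frac (cf_rem x n) \<notin> \<rat>" using frac_in_Rats_iff by blast
  then show ?case by (simp add: Rats_inverse_iff[symmetric, of "frac (cf_rem x n)"] divide_inverse)
qed

lemma cf_a_pos: assumes "x \<notin> \<rat>" shows "cf_a x (Suc n) \<ge> 1"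
proof -
  have "frac (cf_rem x n) \<notin> \<rat>" using cf_rem_irr[OF assms] frac_in_Rats_iff by blast
  then have "frac (cf_rem x n) \<noteq> 0" by (metis Rats_0)
  then have f: "0 < frac (cf_rem x n)" "frac (cf_rem x n) < 1" using frac_ge_0[of "cf_rem x n"] frac_lt_1 by auto
  then have "1 \<le> 1 / frac (cf_rem x n)" by simp
  then show ?thesis by (simp add: cf_a_def)
qed

lemma cf_q_pos2: assumes "x \<notin> \<rat>" shows "cf_q x n \<ge> 1 \<and> cf_q x (Suc n) \<ge> 1"
proof (induction n)
  case 0 then show ?case using cf_a_pos[OF assms, of 0] by simp
next
  case (Suc n)
  have "cf_a x (Suc (Suc n)) \<ge> 1" using cf_a_pos[OF assms] by blast
  moreover have "cf_q x (Suc n) \<ge> 1" "cf_q x n \<ge> 1" using Suc by auto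
  ultimately have "cf_a x (Suc (Suc n)) * cf_q x (Suc n) \<ge> 1 * 1"
    by (intro mult_mono) auto
  then show ?case using Suc by simp
qed

lemma cf_q_pos: "x \<notin> \<rat> \<Longrightarrow> cf_q x n \<ge> 1" using cf_q_pos2 by blast

lemma B_bound: "\<bar>((\<Sum>j=1..m. ln (real j) + 1/(2*real j)) - (real m + 1) * ln (real m + 1) + (real m + 1)) - 1\<bar>
   \<le> (\<Sum>j=1..m. 1/(real j)^2)"
proof (induction m)
  case 0 then show ?case by simp
next
  case (Suc m)
  let ?n = "Suc m"
  have d: "\<bar>1 + 1/(2*real ?n) - (real ?n + 1) * ln (1 + 1/real ?n)\<bar> \<le> 1/(real ?n)^2"
    by (rule diff_bound) simp
  have l: "ln (real ?n + 1) = ln (real ?n) + ln (1 + 1/real ?n)"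
  proof -
    have "real ?n + 1 = real ?n * (1 + 1/real ?n)" by (simp add: field_simps)
    moreover have "1 + 1/real ?n > 0" by (simp add: add_pos_pos)
    ultimately show ?thesis by (simp add: ln_mult)
  qed
  have sm: "(\<Sum>j=1..?n. ln (real j) + 1/(2*real j)) = (\<Sum>j=1..m. ln (real j) + 1/(2*real j)) + (ln (real ?n) + 1/(2*real ?n))" by simp
  have rm: "real m + 1 = real ?n" by simp
  have e: "((\<Sum>j=1..?n. ln (real j) + 1/(2*real j)) - (real ?n + 1) * ln (real ?n + 1) + (real ?n + 1))
     = ((\<Sum>j=1..m. ln (real j) + 1/(2*real j)) - (real m + 1) * ln (real m + 1) + (real m + 1))
       + (1 + 1/(2*real ?n) - (real ?n + 1) * ln (1 + 1/real ?n))"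
    unfolding sm rm l by (simp add: algebra_simps del: of_nat_Suc)
  have s: "(\<Sum>j=1..?n. 1/(real j)^2) = (\<Sum>j=1..m. 1/(real j)^2) + 1/(real ?n)^2" by simp
  show ?case unfolding e s using Suc.IH d by linarith
qed

theorem proposition4p1:
  shows "\<exists>C::real. \<forall>(Q::nat) (\<epsilon>::nat \<Rightarrow> real).
           is_convergent_denom Q \<longrightarrow> (\<forall>j<Q. 0 < \<epsilon> j \<and> \<epsilon> j < 1) \<longrightarrow>
           \<bar>(\<Sum>j<Q. ln ((real j + \<epsilon> j) / real Q)) - real Q * integral {0..1} ln
             - ((\<Sum>j=1..Q-1. (\<epsilon> j - 1/2) / real j) + ln (\<epsilon> 0))\<bar> \<le> C"
proof (intro exI[of _ 5] allI impI)
  fix Q :: nat and \<epsilon> :: "nat \<Rightarrow> real"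
  assume cd: "is_convergent_denom Q" and ep: "\<forall>j<Q. 0 < \<epsilon> j \<and> \<epsilon> j < 1"
  obtain \<alpha> l where "\<alpha> \<notin> \<rat>" "int Q = cf_q \<alpha> l" using cd unfolding is_convergent_denom_def by blast
  then have "int Q \<ge> 1" using cf_q_pos by metis
  then have "Q \<ge> 1" by simp
  then obtain m where Qm: "Q = Suc m" by (cases Q) auto
  have ep0: "0 < \<epsilon> 0" using ep Qm by auto
  have t1: "ln ((real j + \<epsilon> j) / real Q) = ln (real j + \<epsilon> j) - ln (real Q)" if "j < Q" for j
  proof -
    have "0 < real j + \<epsilon> j" using ep that by (simp add: add_nonneg_pos)
    moreover have "0 < real Q" using Qm by simp
    ultimately show ?thesis by (rule ln_divide_pos)
  qed
  have "(\<Sum>j<Q. ln ((real j + \<epsilon> j) / real Q)) = (\<Sum>j<Q. ln (real j + \<epsilon> j) - ln (real Q))"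
    using t1 by (intro sum.cong) auto
  also have "\<dots> = (\<Sum>j<Q. ln (real j + \<epsilon> j)) - real Q * ln (real Q)"
    by (simp add: sum_subtractf)
  also have "(\<Sum>j<Q. ln (real j + \<epsilon> j)) = ln (\<epsilon> 0) + (\<Sum>j=1..m. ln (real j + \<epsilon> j))"
  proof -
    have "{..<Q} = insert 0 {1..m}" using Qm by auto
    then show ?thesis by simp
  qed
  finally have S1: "(\<Sum>j<Q. ln ((real j + \<epsilon> j) / real Q)) =
      ln (\<epsilon> 0) + (\<Sum>j=1..m. ln (real j + \<epsilon> j)) - real Q * ln (real Q)" by simp
  define g where "g j = ln (real j + \<epsilon> j) - ln (real j) - \<epsilon> j / real j" for j
  define B where "B = (\<Sum>j=1..m. ln (real j) + 1/(2*real j)) - (real m + 1) * ln (real m + 1) + (real m + 1)"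
  have eq: "(\<Sum>j<Q. ln ((real j + \<epsilon> j) / real Q)) - real Q * integral {0..1} ln
             - ((\<Sum>j=1..Q-1. (\<epsilon> j - 1/2) / real j) + ln (\<epsilon> 0)) = (\<Sum>j=1..m. g j) + B"
    unfolding S1 integral_ln01 g_def B_def using Qm
    by (simp add: sum.distrib sum_subtractf diff_divide_distrib algebra_simps)
  have "\<bar>\<Sum>j=1..m. g j\<bar> \<le> (\<Sum>j=1..m. \<bar>g j\<bar>)" by (rule sum_abs)
  also have "\<dots> \<le> (\<Sum>j=1..m. 1/(real j)^2)"
    unfolding g_def using ep Qm by (intro sum_mono g_bound) auto
  finally have G: "\<bar>\<Sum>j=1..m. g j\<bar> \<le> (\<Sum>j=1..m. 1/(real j)^2)" .
  have s2: "(\<Sum>j=1..m. 1/(real j)^2) \<le> 2"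
  proof (cases "m = 0")
    case False
    then have "(\<Sum>j=1..m. 1/(real j)^2) \<le> 2 - 1/real m" by (intro sum_inv_sq) auto
    then show ?thesis by (smt (verit) of_nat_0_le_iff divide_nonneg_nonneg)
  qed simp
  have "\<bar>B - 1\<bar> \<le> (\<Sum>j=1..m. 1/(real j)^2)" unfolding B_def by (rule B_bound)
  then show "\<bar>(\<Sum>j<Q. ln ((real j + \<epsilon> j) / real Q)) - real Q * integral {0..1} ln
             - ((\<Sum>j=1..Q-1. (\<epsilon> j - 1/2) / real j) + ln (\<epsilon> 0))\<bar> \<le> 5"
    unfolding eq using G s2 by linarith
qed

end
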